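(* Let $\Omega\subseteq\mathbb{R}^n$ be open, $u:\Omega\to\mathbb{R}^N$ continuous, $x\in\Omega$, $\xi\in\mathbb{S}^{N-1}$, and let $\psi\in C^2(\mathbb{R}^n)^N$ be a second contact $\xi$-map of $u$ at $x$. Then there exists a second contact $\xi$-map $\hat\psi\in C^2(\mathbb{R}^n)^N$ of $u$ at $x$ with $\hat\psi(x)=\psi(x)$, $D\hat\psi(x)=D\psi(x)$, $D^2\hat\psi(x)=D^2\psi(x)$, and such that $\xi^\perp R_{2,x}\hat\psi\equiv0$, where $R_{2,x}\hat\psi(y):=\hat\psi(y)-\hat\psi(x)-D\hat\psi(x)(y-x)-\frac12D^2\hat\psi(x):(y-x)\otimes(y-x)$.
   Context: $\xi^\perp:=I-\xi\otimes\xi$. For $\mathbf{X}=(\mathbf{X}_{\alpha ij})$, $\mathbf{X}:w\otimes w$ has components $\sum_{ij}\mathbf{X}_{\alpha ij}w_iw_j$. Second contact $\xi$-map: $\psi\in C^2(\mathbb{R}^n)^N$ is a second contact $\xi$-map of $u$ at $x$ if $\psi(x)=u(x)$ and for every $L>0$ there is a neighbourhood of $x$ in $\Omega$ on which $|\xi^\perp(u-\psi)(y)|^2\le L^2|y-x|^2[-\xi^\top(u-\psi)(y)]$. *)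

theory Defs
  imports "HOL-Analysis.Analysis"
begin

definition D1 :: "('a::euclidean_space \<Rightarrow> 'b::euclidean_space) \<Rightarrow> 'a \<Rightarrow> ('a \<Rightarrow>\<^sub>L 'b)" where
  "D1 f x = Blinfun (frechet_derivative f (at x))"

definition D2 :: "('a::euclidean_space \<Rightarrow> 'b::euclidean_space) \<Rightarrow> 'a \<Rightarrow> ('a \<Rightarrow>\<^sub>L ('a \<Rightarrow>\<^sub>L 'b))" where
  "D2 f x = Blinfun (frechet_derivative (D1 f) (at x))"

definition C2 :: "('a::euclidean_space \<Rightarrow> 'b::euclidean_space) \<Rightarrow> bool" where
  "C2 f \<longleftrightarrow> (\<forall>y. f differentiable (at y)) \<and> (\<forall>y. D1 f differentiable (at y))
            \<and> continuous_on UNIV (D2 f)"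

definition perp :: "'b::euclidean_space \<Rightarrow> 'b \<Rightarrow> 'b" where
  "perp \<xi> v = v - (\<xi> \<bullet> v) *\<^sub>R \<xi>"

definition second_contact_map ::
  "('a::euclidean_space) set \<Rightarrow> ('a \<Rightarrow> 'b::euclidean_space) \<Rightarrow> 'a \<Rightarrow> 'b \<Rightarrow> ('a \<Rightarrow> 'b) \<Rightarrow> bool" where
  "second_contact_map \<Omega> u x \<xi> \<psi> \<longleftrightarrow> C2 \<psi> \<and> \<psi> x = u x \<and>
     (\<forall>L>0. \<exists>r>0. \<forall>y\<in>\<Omega> \<inter> ball x r.
        (norm (perp \<xi> (u y - \<psi> y)))\<^sup>2 \<le> L\<^sup>2 * (norm (y - x))\<^sup>2 * (- (\<xi> \<bullet> (u y - \<psi> y))))"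

definition R2 :: "('a::euclidean_space \<Rightarrow> 'b::euclidean_space) \<Rightarrow> 'a \<Rightarrow> 'a \<Rightarrow> 'b" where
  "R2 f x y = f y - f x - blinfun_apply (D1 f x) (y - x)
              - (1/2) *\<^sub>R blinfun_apply (blinfun_apply (D2 f x) (y - x)) (y - x)"

end

theory Submission
  imports Defs
begin


definition fam :: "('a::euclidean_space \<Rightarrow> 'b::euclidean_space) \<Rightarrow> ('a \<Rightarrow> ('a \<Rightarrow>\<^sub>L 'b)) \<Rightarrow> ('a \<Rightarrow> ('a \<Rightarrow>\<^sub>L ('a \<Rightarrow>\<^sub>L 'b))) \<Rightarrow> bool" where
  "fam f F1 F2 \<longleftrightarrow> (\<forall>y. (f has_derivative blinfun_apply (F1 y)) (at y))
     \<and> (\<forall>y. (F1 has_derivative blinfun_apply (F2 y)) (at y)) \<and> continuous_on UNIV F2"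

lemma fam_C2:
  assumes "fam f F1 F2"
  shows "C2 f" "D1 f = F1" "D2 f = F2"
proof -
  have d1: "D1 f = F1"
  proof
    fix y
    have "(f has_derivative blinfun_apply (F1 y)) (at y)" using assms by (simp add: fam_def)
    then have "frechet_derivative f (at y) = blinfun_apply (F1 y)"
      using frechet_derivative_at by metis
    then show "D1 f y = F1 y" by (simp add: D1_def blinfun_apply_inverse)
  qed
  show "D1 f = F1" by fact
  show d2: "D2 f = F2"
  proof
    fix y
    have "(F1 has_derivative blinfun_apply (F2 y)) (at y)" using assms by (simp add: fam_def)
    then have "frechet_derivative F1 (at y) = blinfun_apply (F2 y)"
      using frechet_derivative_at by metis
    then show "D2 f y = F2 y" by (simp add: D2_def d1 blinfun_apply_inverse)
  qed
  show "C2 f" using assms unfolding C2_def fam_def d1 d2 differentiable_def by blast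
qed

lemma C2_fam:
  assumes "C2 f"
  shows "fam f (D1 f) (D2 f)"
proof -
  have a: "(f has_derivative blinfun_apply (D1 f y)) (at y)" for y
  proof -
    have "(f has_derivative frechet_derivative f (at y)) (at y)"
      using assms frechet_derivative_works unfolding C2_def by blast
    moreover then have "bounded_linear (frechet_derivative f (at y))"
      using has_derivative_bounded_linear by blast
    ultimately show ?thesis by (simp add: D1_def bounded_linear_Blinfun_apply)
  qed
  have b: "(D1 f has_derivative blinfun_apply (D2 f y)) (at y)" for y
  proof -
    have "(D1 f has_derivative frechet_derivative (D1 f) (at y)) (at y)"
      using assms frechet_derivative_works unfolding C2_def by blast
    moreover then have "bounded_linear (frechet_derivative (D1 f) (at y))"
      using has_derivative_bounded_linear by blast
    ultimately show ?thesis by (simp add: D2_def bounded_linear_Blinfun_apply)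
  qed
  show ?thesis using a b assms unfolding fam_def C2_def by blast
qed

lemma fam_add:
  assumes "fam f F1 F2" "fam g G1 G2"
  shows "fam (\<lambda>y. f y + g y) (\<lambda>y. F1 y + G1 y) (\<lambda>y. F2 y + G2 y)"
  unfolding fam_def
proof (intro conjI allI)
  fix y
  have "((\<lambda>y. f y + g y) has_derivative (\<lambda>h. F1 y h + G1 y h)) (at y)"
    using assms unfolding fam_def by (intro has_derivative_add) auto
  then show "((\<lambda>y. f y + g y) has_derivative blinfun_apply (F1 y + G1 y)) (at y)"
    by (simp add: plus_blinfun.rep_eq)
  have "((\<lambda>y. F1 y + G1 y) has_derivative (\<lambda>h. F2 y h + G2 y h)) (at y)"
    using assms unfolding fam_def by (intro has_derivative_add) auto
  then show "((\<lambda>y. F1 y + G1 y) has_derivative blinfun_apply (F2 y + G2 y)) (at y)"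
    by (simp add: plus_blinfun.rep_eq)
  show "continuous_on UNIV (\<lambda>y. F2 y + G2 y)"
    using assms unfolding fam_def by (intro continuous_intros) auto
qed

lemma fam_diff:
  assumes "fam f F1 F2" "fam g G1 G2"
  shows "fam (\<lambda>y. f y - g y) (\<lambda>y. F1 y - G1 y) (\<lambda>y. F2 y - G2 y)"
  unfolding fam_def
proof (intro conjI allI)
  fix y
  have "((\<lambda>y. f y - g y) has_derivative (\<lambda>h. F1 y h - G1 y h)) (at y)"
    using assms unfolding fam_def by (intro has_derivative_diff) auto
  then show "((\<lambda>y. f y - g y) has_derivative blinfun_apply (F1 y - G1 y)) (at y)"
    by (simp add: minus_blinfun.rep_eq)
  have "((\<lambda>y. F1 y - G1 y) has_derivative (\<lambda>h. F2 y h - G2 y h)) (at y)"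
    using assms unfolding fam_def by (intro has_derivative_diff) auto
  then show "((\<lambda>y. F1 y - G1 y) has_derivative blinfun_apply (F2 y - G2 y)) (at y)"
    by (simp add: minus_blinfun.rep_eq)
  show "continuous_on UNIV (\<lambda>y. F2 y - G2 y)"
    using assms unfolding fam_def by (intro continuous_intros) auto
qed

lemma fam_const: "fam (\<lambda>y. c) (\<lambda>y. 0) (\<lambda>y. 0)"
  unfolding fam_def by (auto intro!: derivative_eq_intros continuous_intros)

lemma fam_comp:
  fixes T :: "'b::euclidean_space \<Rightarrow>\<^sub>L 'c::euclidean_space"
  assumes "fam f F1 F2"
  shows "fam (\<lambda>y. blinfun_apply T (f y)) (\<lambda>y. T o\<^sub>L F1 y)
           (\<lambda>y. Blinfun (\<lambda>A. T o\<^sub>L A) o\<^sub>L F2 y)"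
  unfolding fam_def
proof (intro conjI allI)
  have bl: "bounded_linear (\<lambda>A::'a \<Rightarrow>\<^sub>L 'b. T o\<^sub>L A)"
    by (rule bounded_bilinear.bounded_linear_right[OF bounded_bilinear_blinfun_compose])
  fix y
  have "((\<lambda>y. blinfun_apply T (f y)) has_derivative (\<lambda>h. T (F1 y h))) (at y)"
    using assms unfolding fam_def by (intro bounded_linear.has_derivative[OF blinfun.bounded_linear_right]) auto
  then show "((\<lambda>y. blinfun_apply T (f y)) has_derivative blinfun_apply (T o\<^sub>L F1 y)) (at y)"
    by (simp add: blinfun_compose.rep_eq o_def)
  have "((\<lambda>y. T o\<^sub>L F1 y) has_derivative (\<lambda>h. T o\<^sub>L F2 y h)) (at y)"
    using assms bl unfolding fam_def by (intro bounded_linear.has_derivative[OF bl]) auto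
  then show "((\<lambda>y. T o\<^sub>L F1 y) has_derivative blinfun_apply (Blinfun (\<lambda>A. T o\<^sub>L A) o\<^sub>L F2 y)) (at y)"
    by (simp add: bounded_linear_Blinfun_apply[OF bl] blinfun_compose.rep_eq o_def)
  show "continuous_on UNIV (\<lambda>y. Blinfun (\<lambda>A. T o\<^sub>L A) o\<^sub>L F2 y)"
    using assms unfolding fam_def by (intro continuous_intros) auto
qed

lemma fam_scale:
  assumes "fam f F1 F2"
  shows "fam (\<lambda>y. c *\<^sub>R f y) (\<lambda>y. c *\<^sub>R F1 y) (\<lambda>y. c *\<^sub>R F2 y)"
  unfolding fam_def
proof (intro conjI allI)
  fix y
  have "((\<lambda>y. c *\<^sub>R f y) has_derivative (\<lambda>h. c *\<^sub>R F1 y h)) (at y)"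
    using assms unfolding fam_def by (intro has_derivative_scaleR_right) auto
  then show "((\<lambda>y. c *\<^sub>R f y) has_derivative blinfun_apply (c *\<^sub>R F1 y)) (at y)"
    by (simp add: scaleR_blinfun.rep_eq)
  have "((\<lambda>y. c *\<^sub>R F1 y) has_derivative (\<lambda>h. c *\<^sub>R F2 y h)) (at y)"
    using assms unfolding fam_def by (intro has_derivative_scaleR_right) auto
  then show "((\<lambda>y. c *\<^sub>R F1 y) has_derivative blinfun_apply (c *\<^sub>R F2 y)) (at y)"
    by (simp add: scaleR_blinfun.rep_eq)
  show "continuous_on UNIV (\<lambda>y. c *\<^sub>R F2 y)"
    using assms unfolding fam_def by (intro continuous_intros) auto
qed

lemma fam_lin: "fam (\<lambda>y. blinfun_apply A (y - x)) (\<lambda>y. A) (\<lambda>y. 0)"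
  unfolding fam_def
proof (intro conjI allI)
  fix y
  show "((\<lambda>y. blinfun_apply A (y - x)) has_derivative blinfun_apply A) (at y)"
    by (auto intro!: derivative_eq_intros)
  show "((\<lambda>y. A) has_derivative blinfun_apply 0) (at y)"
    by (auto intro!: derivative_eq_intros)
qed (auto intro: continuous_intros)

lemma fam_quad:
  assumes sym: "\<And>h k. blinfun_apply (blinfun_apply B h) k = blinfun_apply (blinfun_apply B k) h"
  shows "fam (\<lambda>y. blinfun_apply (blinfun_apply B (y - x)) (y - x))
           (\<lambda>y. 2 *\<^sub>R blinfun_apply B (y - x)) (\<lambda>y. 2 *\<^sub>R B)"
  unfolding fam_def
proof (intro conjI allI)
  fix y
  have "((\<lambda>y. blinfun_apply (blinfun_apply B (y - x)) (y - x)) has_derivative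
     (\<lambda>h. blinfun_apply (blinfun_apply B (y - x)) h + blinfun_apply (blinfun_apply B h) (y - x))) (at y)"
    by (auto intro!: derivative_eq_intros)
  then show "((\<lambda>y. blinfun_apply (blinfun_apply B (y - x)) (y - x)) has_derivative
     blinfun_apply (2 *\<^sub>R blinfun_apply B (y - x))) (at y)"
    by (simp add: sym[of _ "y - x"] scaleR_2 plus_blinfun.rep_eq)
  have "((\<lambda>y. 2 *\<^sub>R blinfun_apply B (y - x)) has_derivative (\<lambda>h. 2 *\<^sub>R blinfun_apply B h)) (at y)"
    by (auto intro!: derivative_eq_intros)
  then show "((\<lambda>y. 2 *\<^sub>R blinfun_apply B (y - x)) has_derivative blinfun_apply (2 *\<^sub>R B)) (at y)"
    by (simp add: scaleR_blinfun.rep_eq)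
qed (auto intro: continuous_intros)

lemma deriv_small:
  assumes "(F has_derivative L) (at x)" "e > 0"
  shows "\<exists>d>0. \<forall>y. norm (y - x) < d \<longrightarrow> norm (F y - F x - L (y - x)) \<le> e * norm (y - x)"
proof -
  obtain d where d: "d > 0" and H: "\<And>y. 0 < norm (y - x) \<Longrightarrow> norm (y - x) < d \<Longrightarrow>
      norm (F y - F x - L (y - x)) / norm (y - x) < e"
    using assms unfolding has_derivative_at' by blast
  have L0: "L 0 = 0" using assms(1) has_derivative_bounded_linear linear_simps(3) by blast
  show ?thesis
  proof (intro exI[of _ d] conjI allI impI)
    fix y assume y: "norm (y - x) < d"
    show "norm (F y - F x - L (y - x)) \<le> e * norm (y - x)"
    proof (cases "y = x")
      case True then show ?thesis by (simp add: L0)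
    next
      case False
      then have "0 < norm (y - x)" by simp
      with H[OF this y] show ?thesis by (simp add: divide_less_eq less_imp_le mult.commute)
    qed
  qed (fact d)
qed

lemma sym_estimate:
  fixes f :: "'a::euclidean_space \<Rightarrow> 'b::euclidean_space"
  assumes df: "\<And>y. (f has_derivative blinfun_apply (F1 y)) (at y)"
    and dF: "(F1 has_derivative blinfun_apply B) (at x)"
    and e: "e > 0"
  shows "\<exists>\<delta>>0. \<forall>t. 0 < t \<and> t < \<delta> \<longrightarrow>
     norm (f (x + t *\<^sub>R h + t *\<^sub>R k) - f (x + t *\<^sub>R h) - f (x + t *\<^sub>R k) + f x
           - (t * t) *\<^sub>R blinfun_apply (blinfun_apply B k) h) \<le> e * (t * t)"
proof -
  define M where "M = (2 * norm h + norm k) * norm h + 1"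
  have M: "M > 0" unfolding M_def by (intro add_nonneg_pos) auto
  obtain d where d: "d > 0" and H: "\<And>y. norm (y - x) < d \<Longrightarrow>
      norm (F1 y - F1 x - blinfun_apply B (y - x)) \<le> (e / M) * norm (y - x)"
    using deriv_small[OF dF, of "e / M"] e M by auto
  define \<delta> where "\<delta> = d / (norm h + norm k + 1)"
  have NP: "norm h + norm k + 1 > 0" by (intro add_nonneg_pos) auto
  have \<delta>: "\<delta> > 0" using d NP by (simp add: \<delta>_def)
  show ?thesis
  proof (intro exI[of _ \<delta>] conjI allI impI)
    fix t assume t: "0 < t \<and> t < \<delta>"
    have td: "t * (norm h + norm k) < d"
    proof -
      have "t * (norm h + norm k) \<le> t * (norm h + norm k + 1)" using t by simp
      also have "\<dots> < \<delta> * (norm h + norm k + 1)" using t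
        using NP by (intro mult_strict_right_mono) auto
      also have "\<dots> = d" unfolding \<delta>_def using NP by simp
      finally show ?thesis .
    qed
    define g where "g s = f (x + s *\<^sub>R h + t *\<^sub>R k) - f (x + s *\<^sub>R h)
        - (s * t) *\<^sub>R blinfun_apply (blinfun_apply B k) h" for s
    define v where "v s = blinfun_apply (F1 (x + s *\<^sub>R h + t *\<^sub>R k)) h - blinfun_apply (F1 (x + s *\<^sub>R h)) h
        - t *\<^sub>R blinfun_apply (blinfun_apply B k) h" for s
    have dg: "(g has_derivative (\<lambda>\<sigma>. \<sigma> *\<^sub>R v s)) (at s)" for s
    proof -
      have l1: "((\<lambda>s. x + s *\<^sub>R h + t *\<^sub>R k) has_derivative (\<lambda>\<sigma>. \<sigma> *\<^sub>R h)) (at s)"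
        by (auto intro!: derivative_eq_intros)
      have l2: "((\<lambda>s. x + s *\<^sub>R h) has_derivative (\<lambda>\<sigma>. \<sigma> *\<^sub>R h)) (at s)"
        by (auto intro!: derivative_eq_intros)
      have c1: "((\<lambda>s. f (x + s *\<^sub>R h + t *\<^sub>R k)) has_derivative
          (\<lambda>\<sigma>. blinfun_apply (F1 (x + s *\<^sub>R h + t *\<^sub>R k)) (\<sigma> *\<^sub>R h))) (at s)"
        using has_derivative_compose[OF l1 df] .
      have c2: "((\<lambda>s. f (x + s *\<^sub>R h)) has_derivative
          (\<lambda>\<sigma>. blinfun_apply (F1 (x + s *\<^sub>R h)) (\<sigma> *\<^sub>R h))) (at s)"
        using has_derivative_compose[OF l2 df] .
      have c3: "((\<lambda>s. (s * t) *\<^sub>R blinfun_apply (blinfun_apply B k) h) has_derivative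
          (\<lambda>\<sigma>. (\<sigma> * t) *\<^sub>R blinfun_apply (blinfun_apply B k) h)) (at s)"
        by (auto intro!: derivative_eq_intros)
      have "(g has_derivative (\<lambda>\<sigma>. blinfun_apply (F1 (x + s *\<^sub>R h + t *\<^sub>R k)) (\<sigma> *\<^sub>R h)
           - blinfun_apply (F1 (x + s *\<^sub>R h)) (\<sigma> *\<^sub>R h) - (\<sigma> * t) *\<^sub>R blinfun_apply (blinfun_apply B k) h)) (at s)"
        unfolding g_def by (intro has_derivative_diff c1 c2 c3)
      moreover have "(\<lambda>\<sigma>. blinfun_apply (F1 (x + s *\<^sub>R h + t *\<^sub>R k)) (\<sigma> *\<^sub>R h)
           - blinfun_apply (F1 (x + s *\<^sub>R h)) (\<sigma> *\<^sub>R h) - (\<sigma> * t) *\<^sub>R blinfun_apply (blinfun_apply B k) h)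
          = (\<lambda>\<sigma>. \<sigma> *\<^sub>R v s)"
        by (rule ext) (simp add: v_def blinfun.scaleR_right scaleR_diff_right)
      ultimately show ?thesis by simp
    qed
    have vb: "norm (v s) \<le> e * t" if s: "0 \<le> s" "s \<le> t" for s
    proof -
      let ?y1 = "x + s *\<^sub>R h + t *\<^sub>R k" and ?y2 = "x + s *\<^sub>R h"
      have n1: "norm (?y1 - x) \<le> t * (norm h + norm k)"
      proof -
        have "norm (?y1 - x) = norm (s *\<^sub>R h + t *\<^sub>R k)" by (simp add: algebra_simps)
        also have "\<dots> \<le> s * norm h + t * norm k" using s
          by (metis (no_types) abs_of_nonneg norm_scaleR norm_triangle_le order.refl add_mono order_trans)
        also have "\<dots> \<le> t * norm h + t * norm k" using s by (simp add: mult_right_mono)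
        finally show ?thesis by (simp add: algebra_simps)
      qed
      have n2: "norm (?y2 - x) \<le> t * norm h" using s by (simp add: mult_right_mono)
      have n2': "norm (?y2 - x) < d" using n2 td
      proof -
        have "t * norm h \<le> t * (norm h + norm k)" using t by (intro mult_left_mono) auto
        then show ?thesis using n2 td by linarith
      qed
      have A1: "norm (F1 ?y1 - F1 x - blinfun_apply B (?y1 - x)) \<le> (e / M) * (t * (norm h + norm k))"
      proof -
        have "norm (?y1 - x) < d" using n1 td by linarith
        from H[OF this] have "norm (F1 ?y1 - F1 x - blinfun_apply B (?y1 - x)) \<le> (e / M) * norm (?y1 - x)" .
        also have "\<dots> \<le> (e / M) * (t * (norm h + norm k))"
          using n1 e M by (intro mult_left_mono) auto
        finally show ?thesis .
      qed
      have A2: "norm (F1 ?y2 - F1 x - blinfun_apply B (?y2 - x)) \<le> (e / M) * (t * norm h)"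
      proof -
        from H[OF n2'] have "norm (F1 ?y2 - F1 x - blinfun_apply B (?y2 - x)) \<le> (e / M) * norm (?y2 - x)" .
        also have "\<dots> \<le> (e / M) * (t * norm h)"
          using n2 e M by (intro mult_left_mono) auto
        finally show ?thesis .
      qed
      have veq: "v s = blinfun_apply (F1 ?y1 - F1 x - blinfun_apply B (?y1 - x)) h
                    - blinfun_apply (F1 ?y2 - F1 x - blinfun_apply B (?y2 - x)) h"
        by (simp add: v_def blinfun.diff_left blinfun.add_left blinfun.scaleR_left blinfun.add_right
            blinfun.scaleR_right algebra_simps)
      have "norm (v s) \<le> norm (F1 ?y1 - F1 x - blinfun_apply B (?y1 - x)) * norm h
             + norm (F1 ?y2 - F1 x - blinfun_apply B (?y2 - x)) * norm h"
        unfolding veq by (rule order_trans[OF norm_triangle_ineq4 add_mono[OF norm_blinfun norm_blinfun]])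
      also have "\<dots> \<le> (e / M) * (t * (norm h + norm k)) * norm h + (e / M) * (t * norm h) * norm h"
        using A1 A2 by (intro add_mono mult_right_mono) auto
      also have "\<dots> = (e * t) * (((2 * norm h + norm k) * norm h) / M)"
        using M by (simp add: field_simps)
      also have "\<dots> \<le> (e * t) * 1"
        using e t M by (intro mult_left_mono) (auto simp: M_def)
      finally show ?thesis by simp
    qed
    have cont: "continuous_on {0..t} g"
      using dg by (meson continuous_at_imp_continuous_on has_derivative_continuous)
    obtain s where s: "s \<in> {0<..<t}" and ms: "norm (g t - g 0) \<le> norm ((t - 0) *\<^sub>R v s)"
      using mvt_general[OF _ cont, of "\<lambda>s \<sigma>. \<sigma> *\<^sub>R v s"] dg t by auto
    have "norm (g t - g 0) \<le> e * (t * t)"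
    proof -
      have "norm ((t - 0) *\<^sub>R v s) = t * norm (v s)" using t by simp
      also have "\<dots> \<le> t * (e * t)" using vb[of s] s t by (intro mult_left_mono) auto
      finally show ?thesis using ms by (simp add: mult_ac)
    qed
    moreover have "g t - g 0 = f (x + t *\<^sub>R h + t *\<^sub>R k) - f (x + t *\<^sub>R h) - f (x + t *\<^sub>R k) + f x
           - (t * t) *\<^sub>R blinfun_apply (blinfun_apply B k) h"
      by (simp add: g_def algebra_simps)
    ultimately show "norm (f (x + t *\<^sub>R h + t *\<^sub>R k) - f (x + t *\<^sub>R h) - f (x + t *\<^sub>R k) + f x
           - (t * t) *\<^sub>R blinfun_apply (blinfun_apply B k) h) \<le> e * (t * t)" by simp
  qed (fact \<delta>)
qed

lemma D2_symmetric:
  fixes f :: "'a::euclidean_space \<Rightarrow> 'b::euclidean_space"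
  assumes df: "\<And>y. (f has_derivative blinfun_apply (F1 y)) (at y)"
    and dF: "(F1 has_derivative blinfun_apply B) (at x)"
  shows "blinfun_apply (blinfun_apply B k) h = blinfun_apply (blinfun_apply B h) k"
proof -
  let ?z = "blinfun_apply (blinfun_apply B k) h - blinfun_apply (blinfun_apply B h) k"
  have le: "norm ?z \<le> 2 * e" if e: "e > 0" for e
  proof -
    obtain d1 where d1: "d1 > 0" and H1: "\<And>t. 0 < t \<and> t < d1 \<Longrightarrow>
     norm (f (x + t *\<^sub>R h + t *\<^sub>R k) - f (x + t *\<^sub>R h) - f (x + t *\<^sub>R k) + f x
           - (t * t) *\<^sub>R blinfun_apply (blinfun_apply B k) h) \<le> e * (t * t)"
      using sym_estimate[OF df dF e, of h k] by blast
    obtain d2 where d2: "d2 > 0" and H2: "\<And>t. 0 < t \<and> t < d2 \<Longrightarrow>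
     norm (f (x + t *\<^sub>R k + t *\<^sub>R h) - f (x + t *\<^sub>R k) - f (x + t *\<^sub>R h) + f x
           - (t * t) *\<^sub>R blinfun_apply (blinfun_apply B h) k) \<le> e * (t * t)"
      using sym_estimate[OF df dF e, of k h] by blast
    define t where "t = min d1 d2 / 2"
    have t: "0 < t" "t < d1" "t < d2" using d1 d2 by (auto simp: t_def)
    define E where "E = f (x + t *\<^sub>R h + t *\<^sub>R k) - f (x + t *\<^sub>R h) - f (x + t *\<^sub>R k) + f x"
    have E2: "f (x + t *\<^sub>R k + t *\<^sub>R h) - f (x + t *\<^sub>R k) - f (x + t *\<^sub>R h) + f x = E"
      unfolding E_def by (simp add: add_ac)
    have a: "norm (E - (t * t) *\<^sub>R blinfun_apply (blinfun_apply B k) h) \<le> e * (t * t)"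
      using H1 t unfolding E_def by blast
    have b: "norm (E - (t * t) *\<^sub>R blinfun_apply (blinfun_apply B h) k) \<le> e * (t * t)"
      using H2[of t] t unfolding E2 by blast
    have "(t * t) *\<^sub>R ?z = (E - (t * t) *\<^sub>R blinfun_apply (blinfun_apply B h) k)
              - (E - (t * t) *\<^sub>R blinfun_apply (blinfun_apply B k) h)"
      by (simp add: algebra_simps)
    then have "norm ((t * t) *\<^sub>R ?z) \<le> e * (t * t) + e * (t * t)"
      using a b by (metis norm_triangle_le_diff add_mono)
    moreover have "norm ((t * t) *\<^sub>R ?z) = (t * t) * norm ?z" by simp
    ultimately have "(t * t) * norm ?z \<le> (t * t) * (2 * e)" by (simp add: algebra_simps)
    then show ?thesis using t by (simp add: mult_le_cancel_left_pos)
  qed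
  have "norm ?z = 0"
  proof (rule ccontr)
    assume "norm ?z \<noteq> 0"
    then have "norm ?z > 0" by simp
    with le[of "norm ?z / 4"] show False by simp
  qed
  then show ?thesis by simp
qed

lemma fam_cong:
  assumes "fam f F1 F2" "\<And>y. f y = g y" "\<And>y. F1 y = G1 y" "\<And>y. F2 y = G2 y"
  shows "fam g G1 G2"
proof -
  have "f = g" "F1 = G1" "F2 = G2" using assms(2-4) by auto
  then show ?thesis using assms(1) by simp
qed

lemma fam_Q:
  assumes sym: "\<And>h k. blinfun_apply (blinfun_apply B h) k = blinfun_apply (blinfun_apply B k) h"
  shows "fam (\<lambda>y. c + blinfun_apply A (y - x) + (1/2) *\<^sub>R blinfun_apply (blinfun_apply B (y - x)) (y - x))
             (\<lambda>y. A + blinfun_apply B (y - x)) (\<lambda>y. B)"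
proof -
  have "fam (\<lambda>y. c + blinfun_apply A (y - x) + (1/2) *\<^sub>R blinfun_apply (blinfun_apply B (y - x)) (y - x))
      (\<lambda>y. 0 + A + (1/2) *\<^sub>R (2 *\<^sub>R blinfun_apply B (y - x))) (\<lambda>y. 0 + 0 + (1/2) *\<^sub>R (2 *\<^sub>R B))"
    by (intro fam_add fam_const fam_lin fam_scale fam_quad sym)
  then show ?thesis by (rule fam_cong) auto
qed

lemma taylor_o2:
  fixes f :: "'a::euclidean_space \<Rightarrow> 'b::euclidean_space"
  assumes fam: "fam f F1 F2" and e: "e > 0"
  shows "\<exists>d>0. \<forall>y. norm (y - x) < d \<longrightarrow>
    norm (f y - (f x + blinfun_apply (F1 x) (y - x) + (1/2) *\<^sub>R blinfun_apply (blinfun_apply (F2 x) (y - x)) (y - x)))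
      \<le> e * (norm (y - x))\<^sup>2"
proof -
  let ?B = "F2 x"
  have df: "\<And>y. (f has_derivative blinfun_apply (F1 y)) (at y)"
   and dF: "(F1 has_derivative blinfun_apply ?B) (at x)" using fam unfolding fam_def by auto
  have sym: "\<And>h k. blinfun_apply (blinfun_apply ?B h) k = blinfun_apply (blinfun_apply ?B k) h"
    using D2_symmetric[OF df dF] by metis
  define R where "R y = f y - (f x + blinfun_apply (F1 x) (y - x) + (1/2) *\<^sub>R blinfun_apply (blinfun_apply ?B (y - x)) (y - x))" for y
  have famR: "fam R (\<lambda>y. F1 y - (F1 x + blinfun_apply ?B (y - x))) (\<lambda>y. F2 y - ?B)"
    unfolding R_def by (intro fam_diff fam fam_Q sym)
  obtain d where d: "d > 0" and H: "\<And>y. norm (y - x) < d \<Longrightarrow>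
      norm (F1 y - F1 x - blinfun_apply ?B (y - x)) \<le> e * norm (y - x)"
    using deriv_small[OF dF e] by blast
  show ?thesis
  proof (intro exI[of _ d] conjI allI impI)
    fix y assume y: "norm (y - x) < d"
    let ?S = "cball x (norm (y - x))"
    have "norm (R y - R x) \<le> (e * norm (y - x)) * norm (y - x)"
    proof (rule differentiable_bound[of ?S R "\<lambda>z. blinfun_apply (F1 z - (F1 x + blinfun_apply ?B (z - x)))"])
      show "convex ?S" by simp
      show "(R has_derivative blinfun_apply (F1 z - (F1 x + blinfun_apply ?B (z - x)))) (at z within ?S)" for z
        using famR unfolding fam_def by (blast intro: has_derivative_at_withinI)
      show "onorm (blinfun_apply (F1 z - (F1 x + blinfun_apply ?B (z - x)))) \<le> e * norm (y - x)"
        if z: "z \<in> ?S" for z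
      proof -
        have zx: "norm (z - x) \<le> norm (y - x)" using z by (simp add: dist_norm norm_minus_commute)
        have "onorm (blinfun_apply (F1 z - (F1 x + blinfun_apply ?B (z - x)))) = norm (F1 z - F1 x - blinfun_apply ?B (z - x))"
          by (simp add: norm_blinfun.rep_eq[symmetric] diff_diff_eq)
        also have "\<dots> \<le> e * norm (z - x)" using H zx y by simp
        also have "\<dots> \<le> e * norm (y - x)" using zx e by simp
        finally show ?thesis .
      qed
      show "y \<in> ?S" by (simp add: dist_norm norm_minus_commute)
      show "x \<in> ?S" by simp
    qed
    moreover have "R x = 0" by (simp add: R_def)
    ultimately have "norm (R y) \<le> e * (norm (y - x))\<^sup>2" by (simp add: power2_eq_square mult_ac)
    then show "norm (f y - (f x + blinfun_apply (F1 x) (y - x) + (1/2) *\<^sub>R blinfun_apply (blinfun_apply (F2 x) (y - x)) (y - x)))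
      \<le> e * (norm (y - x))\<^sup>2" by (simp only: R_def)
  qed (fact d)
qed



lemma w_exists:
  fixes R :: "'a::euclidean_space \<Rightarrow> 'b::real_normed_vector"
  assumes o2: "\<And>e. e > 0 \<Longrightarrow> \<exists>d>0. \<forall>y. norm (y - x) < d \<longrightarrow> norm (R y) \<le> e * (norm (y - x))\<^sup>2"
  shows "\<exists>w0 d0. d0 > 0 \<and> (\<forall>t\<ge>0. 0 \<le> w0 t) \<and> w0 0 = 0
    \<and> (\<forall>s t. 0 \<le> s \<longrightarrow> s \<le> t \<longrightarrow> w0 s \<le> w0 t)
    \<and> (\<forall>s t. 0 \<le> s \<longrightarrow> s \<le> t \<longrightarrow> 0 < t \<longrightarrow> s / t * w0 t \<le> w0 s)
    \<and> (\<forall>y. norm (y - x) < d0 \<longrightarrow> norm (R y) \<le> w0 (norm (y - x)) * (norm (y - x))\<^sup>2)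
    \<and> (\<forall>c>0. \<exists>d>0. \<forall>t. 0 \<le> t \<longrightarrow> t < d \<longrightarrow> w0 t \<le> c)"
proof -
  define \<delta> where "\<delta> e = (SOME d. d > 0 \<and> (\<forall>y. norm (y - x) < d \<longrightarrow> norm (R y) \<le> e * (norm (y - x))\<^sup>2))" for e
  have \<delta>: "\<delta> e > 0 \<and> (\<forall>y. norm (y - x) < \<delta> e \<longrightarrow> norm (R y) \<le> e * (norm (y - x))\<^sup>2)" if "e > 0" for e
    unfolding \<delta>_def by (rule someI_ex) (use o2[OF that] in blast)
  define E where "E = {0<..(1::real)}"
  have E: "E \<noteq> {}" "\<And>e. e \<in> E \<Longrightarrow> 0 < e \<and> e \<le> 1" by (auto simp: E_def)
  define w0 where "w0 t = Inf ((\<lambda>e. e + t / \<delta> e) ` E)" for t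
  have bdd: "bdd_below ((\<lambda>e. e + t / \<delta> e) ` E)" if "t \<ge> 0" for t
  proof (rule bdd_belowI[of _ 0])
    fix z assume "z \<in> (\<lambda>e. e + t / \<delta> e) ` E"
    then obtain e where e: "e \<in> E" and z: "z = e + t / \<delta> e" by blast
    have "0 < e" using E(2)[OF e] by simp
    then have "0 < \<delta> e" using \<delta> by blast
    then show "0 \<le> z" using z \<open>0 < e\<close> that by simp
  qed
  have W2: "w0 t \<le> e + t / \<delta> e" if "t \<ge> 0" "e \<in> E" for t e
    unfolding w0_def using bdd[OF that(1)] that(2) by (rule cINF_lower)
  have Wglb: "z \<le> w0 t" if "\<And>e. e \<in> E \<Longrightarrow> z \<le> e + t / \<delta> e" for z t
    unfolding w0_def using E(1) that by (intro cInf_greatest) auto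
  have W1: "0 \<le> w0 t" if "t \<ge> 0" for t
  proof (rule Wglb)
    fix e assume e: "e \<in> E"
    have "0 < e" using E(2)[OF e] by simp
    then have "0 < \<delta> e" using \<delta> by blast
    then show "0 \<le> e + t / \<delta> e" using \<open>0 < e\<close> that by simp
  qed
  have W0: "w0 0 = 0"
  proof -
    have "w0 0 \<le> e" if "e > 0" for e
    proof -
      have "w0 0 \<le> min e 1" using W2[of 0 "min e 1"] that by (auto simp: E_def)
      then show ?thesis by simp
    qed
    then have "w0 0 \<le> 0" by (meson dense not_le)
    with W1[of 0] show ?thesis by simp
  qed
  have W3: "w0 s \<le> w0 t" if "0 \<le> s" "s \<le> t" for s t
  proof (rule Wglb)
    fix e assume e: "e \<in> E"
    have "w0 s \<le> e + s / \<delta> e" using W2 that e by simp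
    also have "\<dots> \<le> e + t / \<delta> e"
    proof -
      have "0 < \<delta> e" using \<delta> E(2)[OF e] by blast
      then show ?thesis using that by (simp add: divide_right_mono)
    qed
    finally show "w0 s \<le> e + t / \<delta> e" .
  qed
  have W4: "s / t * w0 t \<le> w0 s" if "0 \<le> s" "s \<le> t" "0 < t" for s t
  proof (rule Wglb)
    fix e assume e: "e \<in> E"
    have st: "0 \<le> s / t" "s / t \<le> 1" using that by auto
    have "s / t * w0 t \<le> s / t * (e + t / \<delta> e)" using W2[of t e] e that st by (intro mult_left_mono) auto
    also have "\<dots> = s / t * e + s / \<delta> e" using that by (simp add: field_simps)
    also have "\<dots> \<le> e + s / \<delta> e"
    proof -
      have "s / t * e \<le> 1 * e" using st E(2)[OF e] by (intro mult_right_mono) auto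
      then show ?thesis by simp
    qed
    finally show "s / t * w0 t \<le> e + s / \<delta> e" .
  qed
  have W5: "norm (R y) \<le> w0 (norm (y - x)) * (norm (y - x))\<^sup>2" if y: "norm (y - x) < \<delta> 1" for y
  proof (cases "y = x")
    case True
    have d1: "0 < \<delta> 1" and "\<forall>y. norm (y - x) < \<delta> 1 \<longrightarrow> norm (R y) \<le> 1 * (norm (y - x))\<^sup>2"
      using \<delta>[of 1] by auto
    then have "norm (R x) \<le> 1 * (norm (x - x))\<^sup>2" by (metis diff_self norm_zero)
    then show ?thesis using True by simp
  next
    case False
    let ?r = "norm (y - x)"
    have r: "?r > 0" using False by simp
    have R1: "norm (R y) \<le> ?r\<^sup>2" using \<delta>[of 1] y by simp
    have "norm (R y) / ?r\<^sup>2 \<le> w0 ?r"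
    proof (rule Wglb)
      fix e assume e: "e \<in> E"
      have e0: "0 < e" "e \<le> 1" using E(2)[OF e] by auto
      show "norm (R y) / ?r\<^sup>2 \<le> e + ?r / \<delta> e"
      proof (cases "?r < \<delta> e")
        case True
        then have "norm (R y) \<le> e * ?r\<^sup>2" using \<delta>[OF e0(1)] by blast
        then have "norm (R y) / ?r\<^sup>2 \<le> e" using r by (simp add: divide_le_eq)
        moreover have "0 \<le> ?r / \<delta> e" using \<delta>[OF e0(1)] by simp
        ultimately show ?thesis by linarith
      next
        case False
        then have "1 \<le> ?r / \<delta> e" using \<delta>[OF e0(1)] by simp
        moreover have "norm (R y) / ?r\<^sup>2 \<le> 1" using R1 r by simp
        ultimately show ?thesis using e0 by linarith
      qed
    qed
    then show ?thesis using r by (simp add: divide_le_eq)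
  qed
  have W6: "\<exists>d>0. \<forall>t. 0 \<le> t \<longrightarrow> t < d \<longrightarrow> w0 t \<le> c" if c: "c > 0" for c
  proof -
    define e where "e = min 1 (c / 2)"
    have e: "e \<in> E" "e > 0" using c by (auto simp: e_def E_def)
    show ?thesis
    proof (intro exI[of _ "\<delta> e * (c / 2)"] conjI allI impI)
      show "0 < \<delta> e * (c / 2)" using \<delta>[OF e(2)] c by simp
      fix t assume t: "0 \<le> t" "t < \<delta> e * (c / 2)"
      have a: "w0 t \<le> e + t / \<delta> e" using W2 t e by simp
      have b: "t / \<delta> e \<le> c / 2" using t \<delta>[OF e(2)] by (simp add: divide_le_eq mult.commute)
      have "e \<le> c / 2" by (simp add: e_def)
      then show "w0 t \<le> c" using a b by linarith
    qed
  qed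
  have "\<delta> 1 > 0" using \<delta>[of 1] by simp
  then show ?thesis using W1 W0 W3 W4 W5 W6 by blast
qed

lemma w_lip:
  fixes w0 :: "real \<Rightarrow> real"
  assumes W3: "\<forall>s t. 0 \<le> s \<longrightarrow> s \<le> t \<longrightarrow> w0 s \<le> w0 t"
    and W4: "\<forall>s t. 0 \<le> s \<longrightarrow> s \<le> t \<longrightarrow> 0 < t \<longrightarrow> s / t * w0 t \<le> w0 s"
    and a: "a > 0" and \<tau>: "\<tau> \<ge> 0"
  shows "\<bar>w0 \<tau> - w0 a\<bar> \<le> \<bar>\<tau> - a\<bar> / a * w0 a"
proof (cases "\<tau> \<ge> a")
  case True
  have m: "w0 a \<le> w0 \<tau>" using W3 True a by auto
  have "a / \<tau> * w0 \<tau> \<le> w0 a" using W4 True a by auto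
  then have "w0 \<tau> \<le> \<tau> / a * w0 a" using True a by (simp add: field_simps)
  then have "w0 \<tau> - w0 a \<le> (\<tau> - a) / a * w0 a" using a by (simp add: field_simps)
  then show ?thesis using m True by simp
next
  case False
  have m: "w0 \<tau> \<le> w0 a" using W3 False \<tau> by auto
  have "\<tau> / a * w0 a \<le> w0 \<tau>" using W4 False a \<tau> by auto
  then have "w0 a - w0 \<tau> \<le> (a - \<tau>) / a * w0 a" using a by (simp add: field_simps)
  then show ?thesis using m False by simp
qed

lemma w_cont:
  fixes w0 :: "real \<Rightarrow> real"
  assumes W1: "\<forall>t\<ge>0. 0 \<le> w0 t" and W0: "w0 0 = 0"
    and W3: "\<forall>s t. 0 \<le> s \<longrightarrow> s \<le> t \<longrightarrow> w0 s \<le> w0 t"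
    and W4: "\<forall>s t. 0 \<le> s \<longrightarrow> s \<le> t \<longrightarrow> 0 < t \<longrightarrow> s / t * w0 t \<le> w0 s"
    and W6: "\<forall>c>0. \<exists>d>0. \<forall>t. 0 \<le> t \<longrightarrow> t < d \<longrightarrow> w0 t \<le> c"
  shows "continuous_on UNIV (\<lambda>t. w0 \<bar>t\<bar>)"
  unfolding continuous_on_eq_continuous_at[OF open_UNIV]
proof (intro ballI)
  fix t0 :: real
  show "isCont (\<lambda>t. w0 \<bar>t\<bar>) t0"
    unfolding isCont_def LIM_eq
  proof (intro allI impI)
    fix r :: real assume r: "r > 0"
    show "\<exists>s>0. \<forall>t. t \<noteq> t0 \<and> norm (t - t0) < s \<longrightarrow> norm (w0 \<bar>t\<bar> - w0 \<bar>t0\<bar>) < r"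
    proof (cases "t0 = 0")
      case True
      obtain d where d: "d > 0" "\<And>t. 0 \<le> t \<Longrightarrow> t < d \<Longrightarrow> w0 t \<le> r / 2"
        using W6 r by (meson half_gt_zero)
      show ?thesis
      proof (intro exI[of _ d] conjI allI impI)
        fix t assume "t \<noteq> t0 \<and> norm (t - t0) < d"
        then have "\<bar>t\<bar> < d" using True by simp
        then have "w0 \<bar>t\<bar> \<le> r / 2" using d by simp
        moreover have "0 \<le> w0 \<bar>t\<bar>" using W1 by simp
        ultimately show "norm (w0 \<bar>t\<bar> - w0 \<bar>t0\<bar>) < r" using True W0 r by simp
      qed (fact d)
    next
      case False
      define a where "a = \<bar>t0\<bar>"
      have a: "a > 0" using False by (simp add: a_def)
      have wa: "0 \<le> w0 a" using W1 a by simp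
      define s where "s = r * a / (w0 a + 1)"
      have s: "s > 0" using r a wa by (simp add: s_def)
      show ?thesis
      proof (intro exI[of _ s] conjI allI impI)
        fix t assume t: "t \<noteq> t0 \<and> norm (t - t0) < s"
        have "\<bar>w0 \<bar>t\<bar> - w0 a\<bar> \<le> \<bar>\<bar>t\<bar> - a\<bar> / a * w0 a"
          by (rule w_lip[OF W3 W4 a]) simp
        also have "\<dots> \<le> \<bar>t - t0\<bar> / a * w0 a"
          using a wa unfolding a_def by (intro mult_right_mono divide_right_mono) auto
        also have "\<dots> \<le> s / a * w0 a"
          using t a wa by (intro mult_right_mono divide_right_mono) auto
        also have "\<dots> = r * (w0 a / (w0 a + 1))"
        proof -
          have "w0 a + 1 \<noteq> 0" "a + a * w0 a > 0" using wa a by (auto intro: add_pos_nonneg)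
          then show ?thesis using a unfolding s_def by (simp add: field_simps)
        qed
        also have "\<dots> < r * 1" using r wa by (intro mult_strict_left_mono) auto
        finally show "norm (w0 \<bar>t\<bar> - w0 \<bar>t0\<bar>) < r" by (simp add: a_def)
      qed (fact s)
    qed
  qed
qed

lemma antideriv:
  fixes w :: "real \<Rightarrow> real"
  assumes cw: "continuous_on UNIV w"
  shows "\<exists>F. F 0 = 0 \<and> (\<forall>t. (F has_real_derivative w t) (at t))"
proof -
  define F where "F t = integral {0..t} w - integral {t..0} w" for t
  have "(F has_real_derivative w t0) (at t0)" for t0
  proof -
    define a where "a = - \<bar>t0\<bar> - 1"
    define b where "b = \<bar>t0\<bar> + 1"
    have ab: "a < t0" "t0 < b" "a < 0" "0 < b" by (auto simp: a_def b_def)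
    have int: "w integrable_on {c..d}" for c d
      by (rule integrable_continuous_real) (rule continuous_on_subset[OF cw], simp)
    have eq: "integral {a..t} w - integral {a..0} w = F t" if t: "t \<in> {a<..<b}" for t
    proof (cases "t \<ge> 0")
      case True
      have "integral {a..0} w + integral {0..t} w = integral {a..t} w"
        using ab True by (intro Henstock_Kurzweil_Integration.integral_combine int) simp_all
      moreover have "integral {t..0} w = 0"
      proof (cases "t = 0")
        case True then show ?thesis by simp
      next
        case False then show ?thesis using \<open>t \<ge> 0\<close> by simp
      qed
      ultimately show ?thesis by (simp add: F_def)
    next
      case False
      have "integral {a..t} w + integral {t..0} w = integral {a..0} w"
        using ab False t by (intro Henstock_Kurzweil_Integration.integral_combine int) simp_all
      moreover have "integral {0..t} w = 0" using False by simp
      ultimately show ?thesis by (simp add: F_def algebra_simps)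
    qed
    have "((\<lambda>t. integral {a..t} w) has_real_derivative w t0) (at t0 within {a..b})"
      using ab by (intro integral_has_real_derivative continuous_on_subset[OF cw]) auto
    moreover have "at t0 within {a..b} = at t0"
      using ab by (intro at_within_interior) auto
    ultimately have "((\<lambda>t. integral {a..t} w) has_real_derivative w t0) (at t0)" by simp
    then have "((\<lambda>t. integral {a..t} w - integral {a..0} w) has_real_derivative w t0 - 0) (at t0)"
      by (intro DERIV_diff DERIV_const)
    then have "((\<lambda>t. integral {a..t} w - integral {a..0} w) has_real_derivative w t0) (at t0)" by simp
    from has_field_derivative_transform_within_open[OF this, of "{a<..<b}" F] eq ab
    show ?thesis by simp
  qed
  moreover have "F 0 = 0" by (simp add: F_def)
  ultimately show ?thesis by blast
qed

lemma mono_by_deriv: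
  fixes f f' :: "real \<Rightarrow> real"
  assumes d: "\<And>s. (f has_real_derivative f' s) (at s)" and nn: "\<And>s. a \<le> s \<Longrightarrow> s \<le> b \<Longrightarrow> f' s \<ge> 0"
    and ab: "a \<le> b"
  shows "f a \<le> f b"
proof (rule DERIV_nonneg_imp_increasing_open[OF ab])
  show "\<And>x. a < x \<Longrightarrow> x < b \<Longrightarrow> \<exists>y. DERIV f x :> y \<and> 0 \<le> y"
    using d nn by (meson less_imp_le)
  show "continuous_on {a..b} f"
    using d by (meson DERIV_isCont continuous_at_imp_continuous_on)
qed

lemma G_exists:
  fixes w0 :: "real \<Rightarrow> real"
  assumes W1: "\<forall>t\<ge>0. 0 \<le> w0 t" and W0: "w0 0 = 0"
    and W3: "\<forall>s t. 0 \<le> s \<longrightarrow> s \<le> t \<longrightarrow> w0 s \<le> w0 t"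
    and W4: "\<forall>s t. 0 \<le> s \<longrightarrow> s \<le> t \<longrightarrow> 0 < t \<longrightarrow> s / t * w0 t \<le> w0 s"
    and W6: "\<forall>c>0. \<exists>d>0. \<forall>t. 0 \<le> t \<longrightarrow> t < d \<longrightarrow> w0 t \<le> c"
  shows "\<exists>Gs Gs1 Gs2. (\<forall>t. (Gs has_real_derivative Gs1 t) (at t))
     \<and> (\<forall>t. (Gs1 has_real_derivative Gs2 t) (at t)) \<and> continuous_on UNIV Gs2
     \<and> Gs 0 = 0 \<and> Gs1 0 = 0 \<and> Gs2 0 = 0 \<and> (\<forall>t. 0 \<le> Gs t)
     \<and> (\<forall>t. t\<^sup>2 * w0 \<bar>t\<bar> / 6 \<le> Gs t)"
proof -
  define w where "w t = w0 \<bar>t\<bar>" for t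
  have cw: "continuous_on UNIV w" unfolding w_def by (rule w_cont[OF W1 W0 W3 W4 W6])
  have w0: "0 \<le> w t" for t using W1 by (simp add: w_def)
  obtain F1 where F10: "F1 0 = 0" and dF1: "\<And>t. (F1 has_real_derivative w t) (at t)"
    using antideriv[OF cw] by blast
  have cF1: "continuous_on UNIV F1"
    using dF1 by (meson DERIV_isCont continuous_at_imp_continuous_on)
  obtain G where G0: "G 0 = 0" and dG: "\<And>t. (G has_real_derivative F1 t) (at t)"
    using antideriv[OF cF1] by blast
  have F1mono: "F1 s \<le> F1 t" if "s \<le> t" for s t
    by (rule mono_by_deriv[OF dF1 _ that]) (rule w0)
  have Gpos: "0 \<le> G t" for t
  proof (cases "t \<ge> 0")
    case True
    have "G 0 \<le> G t"
    proof (rule mono_by_deriv[OF dG _ True])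
      fix s :: real assume "0 \<le> s"
      then show "0 \<le> F1 s" using F1mono[of 0 s] F10 by simp
    qed
    then show ?thesis using G0 by simp
  next
    case False
    have d: "((\<lambda>s. - G s) has_real_derivative - F1 s) (at s)" for s
      using dG by (intro DERIV_minus)
    have "- G t \<le> - G 0"
    proof (rule mono_by_deriv[OF d])
      fix s :: real assume "s \<le> 0"
      then show "0 \<le> - F1 s" using F1mono[of s 0] F10 by simp
    qed (use False in simp)
    then show ?thesis using G0 by simp
  qed
  have Glow: "t\<^sup>2 * w0 t / 6 \<le> G t" if t: "t > 0" for t
  proof -
    define c where "c = w0 t / t"
    have ws: "c * s \<le> w s" if "0 \<le> s" "s \<le> t" for s
    proof -
      have "s / t * w0 t \<le> w0 s" using W4 that t by auto
      then show ?thesis using that by (simp add: w_def c_def mult.commute)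
    qed
    have d1: "((\<lambda>s. F1 s - c * s\<^sup>2 / 2) has_real_derivative w s - c * s) (at s)" for s
      using dF1 by (auto intro!: derivative_eq_intros)
    have h1: "F1 s - c * s\<^sup>2 / 2 \<ge> 0" if "0 \<le> s" "s \<le> t" for s
    proof -
      have "F1 0 - c * 0\<^sup>2 / 2 \<le> F1 s - c * s\<^sup>2 / 2"
      proof (rule mono_by_deriv[OF d1 _ that(1)])
        fix \<sigma> :: real assume "0 \<le> \<sigma>" "\<sigma> \<le> s"
        then show "0 \<le> w \<sigma> - c * \<sigma>" using ws[of \<sigma>] that by simp
      qed
      then show ?thesis using F10 by simp
    qed
    have d2: "((\<lambda>s. G s - c * s ^ 3 / 6) has_real_derivative F1 s - c * s\<^sup>2 / 2) (at s)" for s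
      using dG by (auto intro!: derivative_eq_intros simp: power2_eq_square)
    have "G 0 - c * 0 ^ 3 / 6 \<le> G t - c * t ^ 3 / 6"
    proof (rule mono_by_deriv[OF d2])
      fix \<sigma> :: real assume "0 \<le> \<sigma>" "\<sigma> \<le> t"
      then show "0 \<le> F1 \<sigma> - c * \<sigma>\<^sup>2 / 2" using h1 by simp
    qed (use t in simp)
    then have "c * t ^ 3 / 6 \<le> G t" using G0 by simp
    moreover have "c * t ^ 3 / 6 = t\<^sup>2 * w0 t / 6" using t by (simp add: c_def power2_eq_square power3_eq_cube)
    ultimately show ?thesis by simp
  qed
  define Gs where "Gs t = G t + G (- t)" for t
  define Gs1 where "Gs1 t = F1 t - F1 (- t)" for t
  define Gs2 where "Gs2 t = w t + w (- t)" for t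
  have dGs: "(Gs has_real_derivative Gs1 t) (at t)" for t
  proof -
    have "((\<lambda>t. G (- t)) has_real_derivative - F1 (- t)) (at t)"
      using DERIV_mirror[of G "F1 (- t)" t] dG by simp
    then show ?thesis unfolding Gs_def Gs1_def using dG[of t] by (metis DERIV_add diff_conv_add_uminus)
  qed
  have dGs1: "(Gs1 has_real_derivative Gs2 t) (at t)" for t
  proof -
    have "((\<lambda>t. F1 (- t)) has_real_derivative - w (- t)) (at t)"
      using DERIV_mirror[of F1 "w (- t)" t] dF1 by simp
    then show ?thesis unfolding Gs1_def Gs2_def using dF1[of t] by (metis DERIV_diff diff_minus_eq_add)
  qed
  have cGs2: "continuous_on UNIV Gs2"
    unfolding Gs2_def by (intro continuous_intros continuous_on_compose2[OF cw]) auto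
  have low: "t\<^sup>2 * w0 \<bar>t\<bar> / 6 \<le> Gs t" for t
  proof (cases "t = 0")
    case True then show ?thesis using G0 by (simp add: Gs_def)
  next
    case False
    show ?thesis
    proof (cases "t > 0")
      case True
      then show ?thesis using Glow[OF True] Gpos[of "- t"] by (simp add: Gs_def)
    next
      case False
      then have "- t > 0" using \<open>t \<noteq> 0\<close> by simp
      then show ?thesis using Glow[of "- t"] Gpos[of t] False by (simp add: Gs_def)
    qed
  qed
  have z: "Gs 0 = 0" "Gs1 0 = 0" "Gs2 0 = 0" using G0 F10 W0 by (simp_all add: Gs_def Gs1_def Gs2_def w_def)
  have p: "0 \<le> Gs t" for t using Gpos[of t] Gpos[of "- t"] by (simp add: Gs_def)
  show ?thesis using dGs dGs1 cGs2 low z p by blast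
qed



lemma comp_deriv: "((\<lambda>y::real^'n. (y - x) $ i) has_derivative (\<lambda>h. h $ i)) F"
proof -
  have "((\<lambda>y. y $ i - x $ i) has_derivative (\<lambda>h. h $ i - 0)) F"
    by (intro has_derivative_diff bounded_linear_imp_has_derivative[OF bounded_linear_vec_nth] has_derivative_const)
  then show ?thesis by simp
qed

lemma fam_coords:
  fixes Gs Gs1 Gs2 :: "real \<Rightarrow> real" and x :: "real^'n"
  assumes dGs: "\<And>t. (Gs has_real_derivative Gs1 t) (at t)"
    and dGs1: "\<And>t. (Gs1 has_real_derivative Gs2 t) (at t)"
    and cGs2: "continuous_on UNIV Gs2"
  shows "fam (\<lambda>y. \<Sum>i\<in>UNIV. Gs ((y - x) $ i))
     (\<lambda>y. \<Sum>i\<in>UNIV. Gs1 ((y - x) $ i) *\<^sub>R blinfun_inner_left (axis i 1))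
     (\<lambda>y. \<Sum>i\<in>UNIV. Gs2 ((y - x) $ i) *\<^sub>R (blinfun_scaleR_left (blinfun_inner_left (axis i 1)) o\<^sub>L blinfun_inner_left (axis i 1)))"
  unfolding fam_def
proof (intro conjI allI)
  fix y :: "real^'n"
  have d1: "((\<lambda>y. \<Sum>i\<in>UNIV. Gs ((y - x) $ i)) has_derivative (\<lambda>h. \<Sum>i\<in>UNIV. h $ i * Gs1 ((y - x) $ i))) (at y)"
    by (intro has_derivative_sum DERIV_compose_FDERIV[OF dGs] comp_deriv)
  have e1: "(\<lambda>h. \<Sum>i\<in>UNIV. h $ i * Gs1 ((y - x) $ i)) =
      blinfun_apply (\<Sum>i\<in>UNIV. Gs1 ((y - x) $ i) *\<^sub>R blinfun_inner_left (axis i 1))"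
    by (rule ext) (simp add: blinfun.sum_left cart_eq_inner_axis mult.commute scaleR_blinfun.rep_eq blinfun_inner_left.rep_eq blinfun_scaleR_left.rep_eq blinfun_compose.rep_eq)
  show "((\<lambda>y. \<Sum>i\<in>UNIV. Gs ((y - x) $ i)) has_derivative
      blinfun_apply (\<Sum>i\<in>UNIV. Gs1 ((y - x) $ i) *\<^sub>R blinfun_inner_left (axis i 1))) (at y)" using d1 unfolding e1 .
  have d2: "((\<lambda>y. \<Sum>i\<in>UNIV. Gs1 ((y - x) $ i) *\<^sub>R blinfun_inner_left (axis i 1)) has_derivative
      (\<lambda>h. \<Sum>i\<in>UNIV. (h $ i * Gs2 ((y - x) $ i)) *\<^sub>R blinfun_inner_left (axis i 1))) (at y)"
    by (intro has_derivative_sum has_derivative_scaleR_left DERIV_compose_FDERIV[OF dGs1] comp_deriv)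
  have e2: "(\<lambda>h. \<Sum>i\<in>UNIV. (h $ i * Gs2 ((y - x) $ i)) *\<^sub>R blinfun_inner_left (axis i 1)) =
      blinfun_apply (\<Sum>i\<in>UNIV. Gs2 ((y - x) $ i) *\<^sub>R (blinfun_scaleR_left (blinfun_inner_left (axis i 1)) o\<^sub>L blinfun_inner_left (axis i 1)))"
    by (rule ext) (simp add: blinfun.sum_left cart_eq_inner_axis mult.commute scaleR_blinfun.rep_eq blinfun_inner_left.rep_eq blinfun_scaleR_left.rep_eq blinfun_compose.rep_eq)
  show "((\<lambda>y. \<Sum>i\<in>UNIV. Gs1 ((y - x) $ i) *\<^sub>R blinfun_inner_left (axis i 1)) has_derivative
      blinfun_apply (\<Sum>i\<in>UNIV. Gs2 ((y - x) $ i) *\<^sub>R (blinfun_scaleR_left (blinfun_inner_left (axis i 1)) o\<^sub>L blinfun_inner_left (axis i 1)))) (at y)"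
    using d2 unfolding e2 .
next
  have c: "continuous_on UNIV (\<lambda>y::real^'n. Gs2 ((y - x) $ i))" for i
    by (rule continuous_on_compose2[OF cGs2]) (auto intro!: continuous_intros)
  show "continuous_on UNIV (\<lambda>y. \<Sum>i\<in>UNIV. Gs2 ((y - x) $ i) *\<^sub>R (blinfun_scaleR_left (blinfun_inner_left (axis i 1)) o\<^sub>L blinfun_inner_left (axis i 1)))"
    by (intro continuous_intros c)
qed

lemma g_exists:
  fixes R :: "real^'n \<Rightarrow> 'b::real_normed_vector" and x :: "real^'n"
  assumes o2: "\<And>e. e > 0 \<Longrightarrow> \<exists>d>0. \<forall>y. norm (y - x) < d \<longrightarrow> norm (R y) \<le> e * (norm (y - x))\<^sup>2"
  shows "\<exists>g G1 G2. fam g G1 G2 \<and> g x = 0 \<and> G1 x = 0 \<and> G2 x = 0 \<and>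
    (\<forall>c>0. \<exists>d>0. \<forall>y. norm (y - x) < d \<longrightarrow> (norm (R y))\<^sup>2 \<le> c * (norm (y - x))\<^sup>2 * g y)"
proof -
  obtain w0 d0 where d0: "d0 > 0" and W1: "\<forall>t\<ge>0. 0 \<le> w0 t" and W0: "w0 0 = 0"
    and W3: "\<forall>s t. 0 \<le> s \<longrightarrow> s \<le> t \<longrightarrow> w0 s \<le> w0 t"
    and W4: "\<forall>s t. 0 \<le> s \<longrightarrow> s \<le> t \<longrightarrow> 0 < t \<longrightarrow> s / t * w0 t \<le> w0 s"
    and W5: "\<forall>y. norm (y - x) < d0 \<longrightarrow> norm (R y) \<le> w0 (norm (y - x)) * (norm (y - x))\<^sup>2"
    and W6: "\<forall>c>0. \<exists>d>0. \<forall>t. 0 \<le> t \<longrightarrow> t < d \<longrightarrow> w0 t \<le> c"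
  proof -
    have "\<exists>w0 d0. d0 > 0 \<and> (\<forall>t\<ge>0. 0 \<le> w0 t) \<and> w0 0 = 0
    \<and> (\<forall>s t. 0 \<le> s \<longrightarrow> s \<le> t \<longrightarrow> w0 s \<le> w0 t)
    \<and> (\<forall>s t. 0 \<le> s \<longrightarrow> s \<le> t \<longrightarrow> 0 < t \<longrightarrow> s / t * w0 t \<le> w0 s)
    \<and> (\<forall>y. norm (y - x) < d0 \<longrightarrow> norm (R y) \<le> w0 (norm (y - x)) * (norm (y - x))\<^sup>2)
    \<and> (\<forall>c>0. \<exists>d>0. \<forall>t. 0 \<le> t \<longrightarrow> t < d \<longrightarrow> w0 t \<le> c)"
      by (rule w_exists) (rule o2)
    then show ?thesis by (elim exE conjE) (rule that, assumption+)
  qed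
  obtain Gs Gs1 Gs2 where H: "(\<forall>t. (Gs has_real_derivative Gs1 t) (at t))
     \<and> (\<forall>t. (Gs1 has_real_derivative Gs2 t) (at t)) \<and> continuous_on UNIV Gs2
     \<and> Gs 0 = 0 \<and> Gs1 0 = 0 \<and> Gs2 0 = 0 \<and> (\<forall>t. 0 \<le> Gs t)
     \<and> (\<forall>t. t\<^sup>2 * w0 \<bar>t\<bar> / 6 \<le> Gs t)"
    using G_exists[OF W1 W0 W3 W4 W6] by blast
  have dGs: "\<forall>t. (Gs has_real_derivative Gs1 t) (at t)"
    and dGs1: "\<forall>t. (Gs1 has_real_derivative Gs2 t) (at t)" and cGs2: "continuous_on UNIV Gs2"
    and z: "Gs 0 = 0" "Gs1 0 = 0" "Gs2 0 = 0" and Gpos: "\<forall>t. 0 \<le> Gs t"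
    and Glow: "\<forall>t. t\<^sup>2 * w0 \<bar>t\<bar> / 6 \<le> Gs t"
    using H by auto
  define g where "g y = (\<Sum>i\<in>UNIV. Gs ((y - x) $ i))" for y
  define G1 where "G1 y = (\<Sum>i\<in>UNIV. Gs1 ((y - x) $ i) *\<^sub>R blinfun_inner_left (axis i (1::real)))" for y :: "real^'n"
  define G2 where "G2 y = (\<Sum>i\<in>UNIV. Gs2 ((y - x) $ i) *\<^sub>R (blinfun_scaleR_left (blinfun_inner_left (axis i (1::real))) o\<^sub>L blinfun_inner_left (axis i (1::real))))" for y :: "real^'n"
  have fam: "fam g G1 G2"
    unfolding g_def[abs_def] G1_def[abs_def] G2_def[abs_def]
    by (rule fam_coords) (use dGs dGs1 cGs2 in auto)
  have gx: "g x = 0" "G1 x = 0" "G2 x = 0" using z by (simp_all add: g_def G1_def G2_def)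
  define n where "n = real CARD('n)"
  have n: "n \<ge> 1" unfolding n_def by simp
  have glow: "(norm (y - x))\<^sup>2 * w0 (norm (y - x)) / (6 * n ^ 3) \<le> g y" for y
  proof -
    define z where "z = y - x"
    define r where "r = norm z"
    obtain j where j: "\<forall>i. \<bar>z $ i\<bar> \<le> \<bar>z $ j\<bar>"
    proof -
      have "finite (range (\<lambda>i. \<bar>z $ i\<bar>))" by simp
      then have "Max (range (\<lambda>i. \<bar>z $ i\<bar>)) \<in> range (\<lambda>i. \<bar>z $ i\<bar>)" by (intro Max_in) auto
      then obtain j where "Max (range (\<lambda>i. \<bar>z $ i\<bar>)) = \<bar>z $ j\<bar>" by (rule rangeE)
      moreover have "\<forall>i. \<bar>z $ i\<bar> \<le> Max (range (\<lambda>i. \<bar>z $ i\<bar>))" by simp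
      ultimately have "\<forall>i. \<bar>z $ i\<bar> \<le> \<bar>z $ j\<bar>" by simp
      then show ?thesis by (rule that)
    qed
    define a where "a = \<bar>z $ j\<bar>"
    have a0: "0 \<le> a" by (simp add: a_def)
    have ar: "a \<le> r" unfolding a_def r_def by (rule component_le_norm_cart)
    have ra: "r \<le> n * a"
    proof -
      have "r \<le> (\<Sum>i\<in>UNIV. \<bar>z $ i\<bar>)" unfolding r_def by (rule norm_le_l1_cart)
      also have "\<dots> \<le> of_nat (card (UNIV::'n set)) * a"
        using j unfolding a_def by (intro sum_bounded_above) auto
      finally show ?thesis by (simp add: n_def)
    qed
    have gj: "Gs (z $ j) \<le> g y"
      unfolding g_def z_def[symmetric] by (rule member_le_sum) (use Gpos in auto)
    have l1: "a\<^sup>2 * w0 a / 6 \<le> Gs (z $ j)" using Glow by (simp add: a_def)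
    show ?thesis
    proof (cases "r = 0")
      case True
      have "0 \<le> g y" using gj Gpos by (meson order_trans)
      then show ?thesis using True by (simp add: r_def z_def)
    next
      case False
      then have r: "r > 0" by (simp add: r_def)
      have wr: "0 \<le> w0 r" using W1 r by simp
      have "w0 r / n \<le> a / r * w0 r"
      proof -
        have "1 / n \<le> a / r" using ra r n by (simp add: field_simps)
        then have "1 / n * w0 r \<le> a / r * w0 r" using wr by (rule mult_right_mono)
        then show ?thesis by simp
      qed
      also have "\<dots> \<le> w0 a" using W4 a0 ar r by auto
      finally have w: "w0 r / n \<le> w0 a" .
      have a2: "(r / n)\<^sup>2 \<le> a\<^sup>2" using ra n r by (intro power_mono) (auto simp: field_simps)
      have "r\<^sup>2 * w0 r / (6 * n ^ 3) = (r / n)\<^sup>2 * (w0 r / n) / 6" using n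
        by (simp add: field_simps power2_eq_square power3_eq_cube)
      also have "\<dots> \<le> a\<^sup>2 * w0 a / 6"
        using a2 w wr n by (intro divide_right_mono mult_mono) auto
      finally show ?thesis using l1 gj by (simp add: r_def z_def)
    qed
  qed
  have main: "\<exists>d>0. \<forall>y. norm (y - x) < d \<longrightarrow> (norm (R y))\<^sup>2 \<le> c * (norm (y - x))\<^sup>2 * g y"
    if c: "c > 0" for c
  proof -
    have N: "6 * n ^ 3 > 0" using n by simp
    obtain d1 where d1: "d1 > 0" and H1: "\<And>t. 0 \<le> t \<Longrightarrow> t < d1 \<Longrightarrow> w0 t \<le> c / (6 * n ^ 3)"
      using W6 c N by (meson divide_pos_pos)
    show ?thesis
    proof (intro exI[of _ "min d0 d1"] conjI allI impI)
      show "0 < min d0 d1" using d0 d1 by simp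
      fix y assume y: "norm (y - x) < min d0 d1"
      define r where "r = norm (y - x)"
      define W where "W = w0 r"
      have W0': "0 \<le> W" using W1 by (simp add: W_def r_def)
      have WR: "norm (R y) \<le> W * r\<^sup>2" using W5 y by (simp add: W_def r_def)
      have Wc: "W \<le> c / (6 * n ^ 3)" using H1 y by (simp add: W_def r_def)
      have "(norm (R y))\<^sup>2 \<le> (W * r\<^sup>2)\<^sup>2" using WR by (intro power_mono) auto
      also have "\<dots> = W * (W * r\<^sup>2 * r\<^sup>2)" by (simp add: power2_eq_square mult_ac)
      also have "\<dots> \<le> (c / (6 * n ^ 3)) * (W * r\<^sup>2 * r\<^sup>2)"
        using Wc W0' by (intro mult_right_mono) auto
      also have "\<dots> = c * r\<^sup>2 * (r\<^sup>2 * W / (6 * n ^ 3))" by (simp add: field_simps)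
      also have "\<dots> \<le> c * r\<^sup>2 * g y"
        using glow[of y] c by (intro mult_left_mono) (auto simp: W_def r_def)
      finally show "(norm (R y))\<^sup>2 \<le> c * (norm (y - x))\<^sup>2 * g y" by (simp add: r_def)
    qed
  qed
  show ?thesis using fam gx main by blast
qed



lemma perp_norm:
  fixes \<xi> q :: "'b::euclidean_space"
  assumes "norm \<xi> = 1"
  shows "(norm (perp \<xi> q))\<^sup>2 = (norm q)\<^sup>2 - (\<xi> \<bullet> q)\<^sup>2"
proof -
  have xx: "\<xi> \<bullet> \<xi> = 1" using assms by (simp add: norm_eq_1)
  have "(norm (perp \<xi> q))\<^sup>2 = (q - (\<xi> \<bullet> q) *\<^sub>R \<xi>) \<bullet> (q - (\<xi> \<bullet> q) *\<^sub>R \<xi>)"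
    by (simp add: perp_def power2_norm_eq_inner)
  also have "\<dots> = q \<bullet> q - 2 * (\<xi> \<bullet> q) * (\<xi> \<bullet> q) + (\<xi> \<bullet> q) * (\<xi> \<bullet> q) * (\<xi> \<bullet> \<xi>)"
    by (simp add: inner_diff_left inner_diff_right inner_commute algebra_simps)
  also have "\<dots> = (norm q)\<^sup>2 - (\<xi> \<bullet> q)\<^sup>2"
    using xx by (simp add: power2_norm_eq_inner[symmetric] power2_eq_square)
  finally show ?thesis .
qed

lemma perp_le:
  fixes \<xi> q :: "'b::euclidean_space"
  assumes "norm \<xi> = 1"
  shows "norm (perp \<xi> q) \<le> norm q"
proof -
  have "(norm (perp \<xi> q))\<^sup>2 \<le> (norm q)\<^sup>2" using perp_norm[OF assms, of q] by simp
  then show ?thesis using power2_le_imp_le by fastforce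
qed

lemma sq_sum_le: "(norm (a + b))\<^sup>2 \<le> 2 * (norm a)\<^sup>2 + 2 * (norm (b::'b::real_normed_vector))\<^sup>2"
proof -
  have "norm (a + b) \<le> norm a + norm b" by (rule norm_triangle_ineq)
  then have "(norm (a + b))\<^sup>2 \<le> (norm a + norm b)\<^sup>2" by (intro power_mono) auto
  also have "\<dots> \<le> 2 * (norm a)\<^sup>2 + 2 * (norm b)\<^sup>2"
  proof -
    have "0 \<le> (norm a - norm b)\<^sup>2" by simp
    moreover have "(norm a - norm b)\<^sup>2 = (norm a)\<^sup>2 - 2 * norm a * norm b + (norm b)\<^sup>2" by (simp add: power2_diff)
    moreover have "(norm a + norm b)\<^sup>2 = (norm a)\<^sup>2 + 2 * norm a * norm b + (norm b)\<^sup>2" by (simp add: power2_sum)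
    ultimately show ?thesis by linarith
  qed
  finally show ?thesis .
qed

theorem lemma36:
  fixes \<Omega> :: "(real^'n) set" and u :: "real^'n \<Rightarrow> real^'m"
    and x :: "real^'n" and \<xi> :: "real^'m" and \<psi> :: "real^'n \<Rightarrow> real^'m"
  assumes "open \<Omega>" and "continuous_on \<Omega> u" and "x \<in> \<Omega>" and "norm \<xi> = 1"
    and "second_contact_map \<Omega> u x \<xi> \<psi>"
  shows "\<exists>\<psi>h. second_contact_map \<Omega> u x \<xi> \<psi>h \<and> \<psi>h x = \<psi> x
           \<and> D1 \<psi>h x = D1 \<psi> x \<and> D2 \<psi>h x = D2 \<psi> x
           \<and> (\<forall>y. perp \<xi> (R2 \<psi>h x y) = 0)"
proof -
  note xi = assms(4)
  have xx: "\<xi> \<bullet> \<xi> = 1" using xi by (simp add: norm_eq_1)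
  have C2\<psi>: "C2 \<psi>" and \<psi>x: "\<psi> x = u x"
    and contact: "\<And>L. L > 0 \<Longrightarrow> \<exists>r>0. \<forall>y\<in>\<Omega> \<inter> ball x r.
        (norm (perp \<xi> (u y - \<psi> y)))\<^sup>2 \<le> L\<^sup>2 * (norm (y - x))\<^sup>2 * (- (\<xi> \<bullet> (u y - \<psi> y)))"
    using assms(5) unfolding second_contact_map_def by auto
  define F1 where "F1 = D1 \<psi>"
  define F2 where "F2 = D2 \<psi>"
  have fam\<psi>: "fam \<psi> F1 F2" unfolding F1_def F2_def by (rule C2_fam[OF C2\<psi>])
  define B where "B = F2 x"
  have df: "\<And>y. (\<psi> has_derivative blinfun_apply (F1 y)) (at y)"
   and dF: "(F1 has_derivative blinfun_apply B) (at x)" using fam\<psi> unfolding fam_def B_def by auto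
  have sym: "\<And>h k. blinfun_apply (blinfun_apply B h) k = blinfun_apply (blinfun_apply B k) h"
    using D2_symmetric[OF df dF] by metis
  define Q where "Q y = \<psi> x + blinfun_apply (F1 x) (y - x) + (1/2) *\<^sub>R blinfun_apply (blinfun_apply B (y - x)) (y - x)" for y
  have famQ: "fam Q (\<lambda>y. F1 x + blinfun_apply B (y - x)) (\<lambda>y. B)"
    unfolding Q_def[abs_def] by (rule fam_Q[OF sym])
  define R where "R y = \<psi> y - Q y" for y
  have o2: "\<exists>d>0. \<forall>y. norm (y - x) < d \<longrightarrow> norm (R y) \<le> e * (norm (y - x))\<^sup>2" if "e > 0" for e
    using taylor_o2[OF fam\<psi> that, of x] unfolding R_def Q_def B_def .
  obtain g G1 G2 where famg: "fam g G1 G2" and g0: "g x = 0" "G1 x = 0" "G2 x = 0"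
    and gbound: "\<And>c. c > 0 \<Longrightarrow> \<exists>d>0. \<forall>y. norm (y - x) < d \<longrightarrow> (norm (R y))\<^sup>2 \<le> c * (norm (y - x))\<^sup>2 * g y"
    using g_exists[of x R] o2 by blast
  define Xi where "Xi = blinfun_scaleR_left \<xi>"
  define Pi where "Pi = Xi o\<^sub>L blinfun_inner_left \<xi>"
  have Xi_apply: "blinfun_apply Xi c = c *\<^sub>R \<xi>" for c by (simp add: Xi_def)
  have Pi_apply: "blinfun_apply Pi v = (v \<bullet> \<xi>) *\<^sub>R \<xi>" for v by (simp add: Pi_def Xi_def)
  define \<psi>h where "\<psi>h y = Q y + blinfun_apply Pi (\<psi> y - Q y) + blinfun_apply Xi (g y)" for y
  have famh: "fam \<psi>h
     (\<lambda>y. (F1 x + blinfun_apply B (y - x)) + (Pi o\<^sub>L (F1 y - (F1 x + blinfun_apply B (y - x)))) + (Xi o\<^sub>L G1 y))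
     (\<lambda>y. B + (Blinfun (\<lambda>A. Pi o\<^sub>L A) o\<^sub>L (F2 y - B)) + (Blinfun (\<lambda>A. Xi o\<^sub>L A) o\<^sub>L G2 y))"
    unfolding \<psi>h_def[abs_def]
    by (intro fam_add famQ fam_comp fam_diff fam\<psi> famg)
  note hC = fam_C2[OF famh]
  have Qx: "Q x = \<psi> x" by (simp add: Q_def)
  have hx: "\<psi>h x = \<psi> x" by (simp add: \<psi>h_def Qx g0 Xi_apply Pi_apply)
  have hD1: "D1 \<psi>h x = F1 x"
    unfolding hC(2) by (rule blinfun_eqI) (simp add: g0 blinfun.zero_right Pi_apply Xi_apply blinfun.diff_left)
  have hD2: "D2 \<psi>h x = B"
    unfolding hC(3) using g0 by (intro blinfun_eqI) (simp add: B_def)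
  have hperp: "perp \<xi> (R2 \<psi>h x y) = 0" for y
  proof -
    have "R2 \<psi>h x y = \<psi>h y - Q y"
      by (simp add: R2_def hx hD1 hD2 Q_def)
    also have "\<dots> = (((\<psi> y - Q y) \<bullet> \<xi>) + g y) *\<^sub>R \<xi>"
      by (simp add: \<psi>h_def Pi_apply Xi_apply scaleR_add_left)
    finally have e: "R2 \<psi>h x y = (((\<psi> y - Q y) \<bullet> \<xi>) + g y) *\<^sub>R \<xi>" .
    show ?thesis unfolding e perp_def using xx by simp
  qed
  have hcontact: "\<exists>r>0. \<forall>y\<in>\<Omega> \<inter> ball x r.
        (norm (perp \<xi> (u y - \<psi>h y)))\<^sup>2 \<le> L\<^sup>2 * (norm (y - x))\<^sup>2 * (- (\<xi> \<bullet> (u y - \<psi>h y)))"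
    if L: "L > 0" for L
  proof -
    obtain r1 where r1: "r1 > 0" and H1: "\<And>y. y \<in> \<Omega> \<inter> ball x r1 \<Longrightarrow>
        (norm (perp \<xi> (u y - \<psi> y)))\<^sup>2 \<le> (L / 2)\<^sup>2 * (norm (y - x))\<^sup>2 * (- (\<xi> \<bullet> (u y - \<psi> y)))"
      using contact[of "L / 2"] L by auto
    obtain d where d: "d > 0" and H2: "\<And>y. norm (y - x) < d \<Longrightarrow>
        (norm (R y))\<^sup>2 \<le> (L\<^sup>2 / 2) * (norm (y - x))\<^sup>2 * g y"
      using gbound[of "L\<^sup>2 / 2"] L by auto
    show ?thesis
    proof (intro exI[of _ "min r1 d"] conjI ballI)
      show "0 < min r1 d" using r1 d by simp
      fix y assume y: "y \<in> \<Omega> \<inter> ball x (min r1 d)"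
      define v where "v = u y - \<psi> y"
      define q where "q = R y"
      define a where "a = - (\<xi> \<bullet> v)"
      define \<rho> where "\<rho> = (norm (y - x))\<^sup>2"
      have y1: "y \<in> \<Omega> \<inter> ball x r1" using y by auto
      have y2: "norm (y - x) < d" using y by (simp add: dist_norm norm_minus_commute)
      have A: "(norm (perp \<xi> v))\<^sup>2 \<le> (L / 2)\<^sup>2 * \<rho> * a"
        using H1[OF y1] by (simp add: v_def a_def \<rho>_def)
      have Bq: "(norm q)\<^sup>2 \<le> (L\<^sup>2 / 2) * \<rho> * g y"
        using H2[OF y2] by (simp add: q_def \<rho>_def)
      have uh: "u y - \<psi>h y = v + q - (q \<bullet> \<xi>) *\<^sub>R \<xi> - g y *\<^sub>R \<xi>"
        by (simp add: \<psi>h_def v_def q_def R_def Pi_apply Xi_apply algebra_simps)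
      have ip: "\<xi> \<bullet> (u y - \<psi>h y) = \<xi> \<bullet> v - g y"
        unfolding uh using xx by (simp add: inner_diff_right inner_add_right inner_commute)
      have pp: "perp \<xi> (u y - \<psi>h y) = perp \<xi> v + perp \<xi> q"
        unfolding perp_def ip unfolding uh
        by (simp add: inner_commute algebra_simps)
      have pq: "(norm (perp \<xi> q))\<^sup>2 \<le> (norm q)\<^sup>2"
        using perp_le[OF xi, of q] by (simp add: power_mono)
      have ra: "0 \<le> \<rho> * a"
      proof -
        have "0 \<le> (L / 2)\<^sup>2 * \<rho> * a" using A by (meson order_trans zero_le_power2)
        then have "0 \<le> (L / 2)\<^sup>2 * (\<rho> * a)" by (simp add: mult.assoc)
        then show ?thesis using L by (simp add: zero_le_mult_iff)
      qed
      have "(norm (perp \<xi> (u y - \<psi>h y)))\<^sup>2 \<le> 2 * (norm (perp \<xi> v))\<^sup>2 + 2 * (norm (perp \<xi> q))\<^sup>2"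
        unfolding pp by (rule sq_sum_le)
      also have "\<dots> \<le> 2 * ((L / 2)\<^sup>2 * \<rho> * a) + 2 * ((L\<^sup>2 / 2) * \<rho> * g y)"
        using A Bq pq by linarith
      also have "\<dots> = L\<^sup>2 * (\<rho> * a) / 2 + L\<^sup>2 * \<rho> * g y" by (simp add: power_divide field_simps)
      also have "\<dots> \<le> L\<^sup>2 * (\<rho> * a) + L\<^sup>2 * \<rho> * g y"
      proof -
        have "0 \<le> L\<^sup>2 * (\<rho> * a)" using ra by simp
        then show ?thesis by linarith
      qed
      also have "\<dots> = L\<^sup>2 * (norm (y - x))\<^sup>2 * (- (\<xi> \<bullet> (u y - \<psi>h y)))"
        unfolding ip a_def \<rho>_def by (simp add: algebra_simps)
      finally show "(norm (perp \<xi> (u y - \<psi>h y)))\<^sup>2 \<le> L\<^sup>2 * (norm (y - x))\<^sup>2 * (- (\<xi> \<bullet> (u y - \<psi>h y)))" .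
    qed
  qed
  have scm: "second_contact_map \<Omega> u x \<xi> \<psi>h"
    unfolding second_contact_map_def using hC(1) hx \<psi>x hcontact by auto
  show ?thesis
    using scm hx hD1 hD2 hperp unfolding F1_def B_def F2_def by blast
qed

end
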